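(* (a) $P_4$ divides $Q_5$. (b) $P_4$ divides $Q_7$. (c) $P_8$ divides $Q_9$. (d) $P_8$ divides $Q_{11}$.
   Context: $Q_q$ denotes the $q$-dimensional hypercube graph (vertices are $q$-tuples of $0$'s and $1$'s, adjacent iff they differ in exactly one coordinate). $P_m$ denotes the path with $m$ edges. For graphs $H$ and $G$, "$H$ divides $G$" means there is a collection of subgraphs $H_i$ of $G$, each isomorphic to $H$, such that $E(G)$ is the disjoint union of the edge sets $E(H_i)$. *)

theory Defs
  imports Main
begin

type_synonym 'a graph = "'a set \<times> 'a set set"

definition verts :: "'a graph \<Rightarrow> 'a set" where "verts G = fst G"
definition edges :: "'a graph \<Rightarrow> 'a set set" where "edges G = snd G"

definition simple_graph :: "'a graph \<Rightarrow> bool" where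
  "simple_graph G \<longleftrightarrow> (\<forall>e\<in>edges G. e \<subseteq> verts G \<and> card e = 2)"

definition subgraph :: "'a graph \<Rightarrow> 'a graph \<Rightarrow> bool" where
  "subgraph H G \<longleftrightarrow> simple_graph H \<and> verts H \<subseteq> verts G \<and> edges H \<subseteq> edges G"

definition graph_iso :: "'a graph \<Rightarrow> 'b graph \<Rightarrow> bool" where
  "graph_iso G H \<longleftrightarrow> (\<exists>f. bij_betw f (verts G) (verts H) \<and>
      (\<forall>x\<in>verts G. \<forall>y\<in>verts G. {x, y} \<in> edges G \<longleftrightarrow> {f x, f y} \<in> edges H))"

definition graph_divides :: "'a graph \<Rightarrow> 'b graph \<Rightarrow> bool" where
  "graph_divides H G \<longleftrightarrow> (\<exists>\<H> :: 'b graph set.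
      (\<forall>K\<in>\<H>. subgraph K G \<and> graph_iso H K) \<and>
      (\<forall>K1\<in>\<H>. \<forall>K2\<in>\<H>. K1 \<noteq> K2 \<longrightarrow> edges K1 \<inter> edges K2 = {}) \<and>
      \<Union>(edges ` \<H>) = edges G)"

definition hamming :: "bool list \<Rightarrow> bool list \<Rightarrow> nat" where
  "hamming u v = card {i. i < length u \<and> u ! i \<noteq> v ! i}"

definition hypercube :: "nat \<Rightarrow> bool list graph" where
  "hypercube q = ({xs. length xs = q},
     {{u, v} | u v. length u = q \<and> length v = q \<and> hamming u v = 1})"

definition path_graph :: "nat \<Rightarrow> nat graph" where
  "path_graph m = ({0..m}, {{i, Suc i} | i. i < m})"

end

theory Submission
  imports Defs
begin

lemmas xor_ac = xor.assoc xor.commute xor.left_commute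

definition flipb :: "bool list \<Rightarrow> nat \<Rightarrow> bool list" where
  "flipb v d = v[d := (\<not> v!d)]"

definition pth :: "bool list \<Rightarrow> nat list \<Rightarrow> nat \<Rightarrow> bool list" where
  "pth v ds i = foldl flipb v (take i ds)"

definition Kg :: "bool list \<Rightarrow> nat list \<Rightarrow> bool list graph" where
  "Kg v ds = (pth v ds ` {0..length ds}, {{pth v ds i, pth v ds (Suc i)} | i. i < length ds})"

fun syn :: "nat list \<Rightarrow> bool list \<Rightarrow> nat" where
  "syn (h#hs) (b#bs) = (if b then xor h (syn hs bs) else syn hs bs)"
| "syn _ _ = 0"

fun itr :: "nat \<Rightarrow> nat list \<Rightarrow> nat list \<Rightarrow> (nat \<times> nat \<times> nat \<times> nat) list" where
  "itr n (d#ds) (x#y#ss) = (n,d,x,y) # itr (Suc n) ds (y#ss)"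
| "itr n _ _ = []"

lemma length_flipb[simp]: "length (flipb v d) = length v"
  by (simp add: flipb_def)

lemma nth_flipb: "p < length v \<Longrightarrow> flipb v d ! p = (if p = d then \<not> v!p else v!p)"
  by (simp add: flipb_def nth_list_update)

lemma flipb_flipb[simp]: "flipb (flipb v d) d = v"
  by (cases "d < length v") (simp_all add: flipb_def list_update_beyond)

lemma xor_cancel[simp]: "xor a (xor a b) = (b::nat)"
  by (simp add: xor.assoc[symmetric])

lemma flipb_inj: "d < length x \<Longrightarrow> flipb x d = flipb x d' \<Longrightarrow> d = d'"
  by (metis nth_flipb)

lemma flipb_flipb_eq: "d < length x \<Longrightarrow> flipb (flipb x d) d' = x \<Longrightarrow> d = d'"
  by (metis flipb_flipb flipb_inj length_flipb)

lemma length_foldl_flipb[simp]: "length (foldl flipb v xs) = length v"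
  by (induction xs arbitrary: v) auto

lemma nth_foldl_flipb: "distinct xs \<Longrightarrow> p < length v \<Longrightarrow> foldl flipb v xs ! p = (v!p \<noteq> (p \<in> set xs))"
  by (induction xs arbitrary: v) (auto simp: nth_flipb)

lemma length_pth[simp]: "length (pth v ds i) = length v"
  by (simp add: pth_def)

lemma nth_pth: "distinct ds \<Longrightarrow> p < length v \<Longrightarrow> pth v ds i ! p = (v!p \<noteq> (p \<in> set (take i ds)))"
  by (simp add: pth_def nth_foldl_flipb)

lemma pth_0[simp]: "pth v ds 0 = v"
  by (simp add: pth_def)

lemma pth_Suc: "i < length ds \<Longrightarrow> pth v ds (Suc i) = flipb (pth v ds i) (ds!i)"
  by (simp add: pth_def take_Suc_conv_app_nth)

lemma pth_self_inv: "distinct ds \<Longrightarrow> pth (pth u ds i) ds i = u"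
  by (rule nth_equalityI) (auto simp: nth_pth)

lemma pth_inj_v: "distinct ds \<Longrightarrow> pth v ds i = pth v' ds i \<Longrightarrow> v = v'"
  by (metis pth_self_inv)

lemma syn_flipb: "length v = length cols \<Longrightarrow> d < length v \<Longrightarrow> syn cols (flipb v d) = xor (syn cols v) (cols!d)"
proof (induction cols arbitrary: v d)
  case Nil
  then show ?case by simp
next
  case (Cons h hs)
  then obtain b bs where v: "v = b#bs" by (cases v) auto
  show ?case
  proof (cases d)
    case 0
    then show ?thesis using v by (auto simp: flipb_def xor_ac)
  next
    case (Suc d')
    have "flipb v d = b # flipb bs d'" using v Suc by (simp add: flipb_def)
    then show ?thesis using Cons v Suc by (auto simp: xor_ac)
  qed
qed

lemma xor_lt: "(a::nat) < 2^m \<Longrightarrow> b < 2^m \<Longrightarrow> xor a b < 2^m"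
  by (metis take_bit_nat_eq_self_iff take_bit_xor)

lemma syn_lt: "\<forall>c\<in>set cols. c < 2^m \<Longrightarrow> syn cols v < 2^m"
  by (induction cols v rule: syn.induct) (auto intro: xor_lt)

lemma syn_pth:
  assumes "length v = length cols" "\<forall>d\<in>set ds. d < length cols"
    "\<forall>j<length ds. ss!Suc j = xor (ss!j) (cols!(ds!j))" "i \<le> length ds"
  shows "syn cols (pth v ds i) = xor (syn cols v) (xor (ss!0) (ss!i))"
  using assms(4)
proof (induction i)
  case 0
  then show ?case by simp
next
  case (Suc i)
  then have i: "i < length ds" by simp
  have "syn cols (pth v ds (Suc i)) = xor (syn cols (pth v ds i)) (cols!(ds!i))"
    using i assms(1,2) by (simp add: pth_Suc syn_flipb)
  also have "\<dots> = xor (syn cols v) (xor (ss!0) (ss!Suc i))"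
    using Suc i assms(3) by (simp add: xor_ac)
  finally show ?case .
qed

lemma hamming_flipb: "d < length u \<Longrightarrow> hamming u (flipb u d) = 1"
proof -
  assume d: "d < length u"
  have "{i. i < length u \<and> u ! i \<noteq> flipb u d ! i} = {d}"
    using d by (auto simp: nth_flipb split: if_splits)
  then show ?thesis by (simp add: hamming_def)
qed

lemma hamming1:
  assumes "length u = length w" "hamming u w = 1"
  shows "\<exists>d<length u. w = flipb u d"
proof -
  from assms(2) obtain d where S: "{i. i < length u \<and> u ! i \<noteq> w ! i} = {d}"
    by (auto simp: hamming_def card_1_singleton_iff)
  then have d: "d < length u" by auto
  have "w = flipb u d"
  proof (rule nth_equalityI)
    show "length w = length (flipb u d)" using assms by simp
    fix i assume "i < length w"
    then show "w ! i = flipb u d ! i" using S assms(1) by (auto simp: nth_flipb)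
  qed
  then show ?thesis using d by blast
qed

lemma pth_neq:
  assumes "distinct ds" "\<forall>d\<in>set ds. d < length v" "i < j" "j \<le> length ds"
  shows "pth v ds i \<noteq> pth v ds j"
proof
  assume eq: "pth v ds i = pth v ds j"
  let ?p = "ds!i"
  have ip: "i < length ds" using assms by simp
  have p: "?p < length v" using assms(2) ip by simp
  have "take j ds ! i = ds ! i" "i < length (take j ds)" using assms(3,4) by auto
  then have in_j: "?p \<in> set (take j ds)" by (metis nth_mem)
  have nin_i: "?p \<notin> set (take i ds)"
  proof
    assume "?p \<in> set (take i ds)"
    then obtain l where l: "l < length (take i ds)" "take i ds ! l = ?p" by (auto simp: in_set_conv_nth)
    then have "l < i" "ds ! l = ds ! i" by auto
    then show False using assms(1) ip nth_eq_iff_index_eq by fastforce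
  qed
  have "pth v ds i ! ?p = pth v ds j ! ?p" using eq by simp
  then show False using nth_pth[OF assms(1) p] in_j nin_i by simp
qed

lemma pth_inj_on:
  assumes "distinct ds" "\<forall>d\<in>set ds. d < length v"
  shows "inj_on (pth v ds) {0..length ds}"
proof (rule inj_onI)
  fix x y assume "x \<in> {0..length ds}" "y \<in> {0..length ds}" "pth v ds x = pth v ds y"
  then show "x = y" using pth_neq[OF assms] by (metis atLeastAtMost_iff linorder_neqE_nat)
qed

lemma doubleton_inj:
  assumes "inj_on f A" "x \<in> A" "y \<in> A" "i \<in> A" "j \<in> A" "{f x, f y} = {f i, f j}"
  shows "{x, y} = {i, j}"
proof -
  have "(f x = f i \<and> f y = f j) \<or> (f x = f j \<and> f y = f i)"
    using assms(6) by (simp add: doubleton_eq_iff)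
  then have "(x = i \<and> y = j) \<or> (x = j \<and> y = i)"
    using assms(1-5) by (meson inj_on_eq_iff)
  then show ?thesis by auto
qed

lemma verts_Kg: "verts (Kg v ds) = pth v ds ` {0..length ds}"
  by (simp add: Kg_def verts_def)
lemma edges_Kg: "edges (Kg v ds) = {{pth v ds i, pth v ds (Suc i)} | i. i < length ds}"
  by (simp add: Kg_def edges_def)
lemma verts_hc: "verts (hypercube q) = {xs. length xs = q}"
  by (simp add: hypercube_def verts_def)
lemma edges_hc: "edges (hypercube q) = {{u, v} | u v. length u = q \<and> length v = q \<and> hamming u v = 1}"
  by (simp add: hypercube_def edges_def)
lemma verts_pg: "verts (path_graph k) = {0..k}"
  by (simp add: path_graph_def verts_def)
lemma edges_pg: "edges (path_graph k) = {{i, Suc i} | i. i < k}"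
  by (simp add: path_graph_def edges_def)

lemma Kg_sub:
  assumes "length v = q" "distinct ds" "\<forall>d\<in>set ds. d < q"
  shows "subgraph (Kg v ds) (hypercube q)"
  unfolding subgraph_def simple_graph_def
proof (intro conjI ballI)
  fix e assume "e \<in> edges (Kg v ds)"
  then obtain i where i: "i < length ds" "e = {pth v ds i, pth v ds (Suc i)}"
    by (auto simp: edges_Kg)
  have "pth v ds i \<in> verts (Kg v ds)" "pth v ds (Suc i) \<in> verts (Kg v ds)"
    using i(1) by (auto simp: verts_Kg)
  then show "e \<subseteq> verts (Kg v ds)" using i by auto
  have "pth v ds i \<noteq> pth v ds (Suc i)"
    using pth_neq[OF assms(2), of v i "Suc i"] assms i by simp
  then show "card e = 2" using i by simp
next
  show "verts (Kg v ds) \<subseteq> verts (hypercube q)" using assms by (auto simp: verts_Kg verts_hc)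
next
  show "edges (Kg v ds) \<subseteq> edges (hypercube q)"
  proof
  fix e assume "e \<in> edges (Kg v ds)"
  then obtain i where i: "i < length ds" "e = {pth v ds i, pth v ds (Suc i)}"
    by (auto simp: edges_Kg)
  have "hamming (pth v ds i) (pth v ds (Suc i)) = 1"
    using i assms by (simp add: pth_Suc hamming_flipb)
  moreover have "length (pth v ds i) = q" "length (pth v ds (Suc i)) = q" using assms by auto
  ultimately show "e \<in> edges (hypercube q)"
    unfolding edges_hc i(2) by blast
  qed
qed

lemma Kg_iso:
  assumes "distinct ds" "\<forall>d\<in>set ds. d < length v"
  shows "graph_iso (path_graph (length ds)) (Kg v ds)"
proof -
  let ?f = "pth v ds"
  have inj: "inj_on ?f {0..length ds}" using pth_inj_on assms by simp
  have E: "\<forall>x\<in>{0..length ds}. \<forall>y\<in>{0..length ds}.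
      {x, y} \<in> {{i, Suc i} | i. i < length ds} \<longleftrightarrow> {?f x, ?f y} \<in> {{?f i, ?f (Suc i)} | i. i < length ds}"
  proof (intro ballI iffI)
    fix x y assume "x \<in> {0..length ds}" "y \<in> {0..length ds}" "{x, y} \<in> {{i, Suc i} | i. i < length ds}"
    then obtain i where i: "i < length ds" "{x, y} = {i, Suc i}" by auto
    then have "(x = i \<and> y = Suc i) \<or> (x = Suc i \<and> y = i)" by (simp add: doubleton_eq_iff)
    then have "{?f x, ?f y} = {?f i, ?f (Suc i)}" by (auto simp: insert_commute)
    then show "{?f x, ?f y} \<in> {{?f i, ?f (Suc i)} | i. i < length ds}" using i(1) by blast
  next
    fix x y assume xy: "x \<in> {0..length ds}" "y \<in> {0..length ds}"
      "{?f x, ?f y} \<in> {{?f i, ?f (Suc i)} | i. i < length ds}"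
    then obtain i where i: "i < length ds" "{?f x, ?f y} = {?f i, ?f (Suc i)}" by auto
    have "i \<in> {0..length ds}" "Suc i \<in> {0..length ds}" using i(1) by auto
    then have "{x, y} = {i, Suc i}" using doubleton_inj[OF inj xy(1) xy(2)] i(2) by blast
    then show "{x, y} \<in> {{i, Suc i} | i. i < length ds}" using i by auto
  qed
  have B: "bij_betw ?f (verts (path_graph (length ds))) (verts (Kg v ds))"
    using inj by (simp add: bij_betw_def verts_pg verts_Kg)
  have E': "\<forall>x\<in>verts (path_graph (length ds)). \<forall>y\<in>verts (path_graph (length ds)).
      {x, y} \<in> edges (path_graph (length ds)) \<longleftrightarrow> {?f x, ?f y} \<in> edges (Kg v ds)"
    unfolding verts_pg edges_pg edges_Kg by (rule E)
  show ?thesis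
    unfolding graph_iso_def by (rule exI[of _ ?f]) (rule conjI[OF B E'])
qed

lemma mem_itr: "length ss = Suc (length ds) \<Longrightarrow>
   t \<in> set (itr n ds ss) \<longleftrightarrow> (\<exists>j<length ds. t = (n+j, ds!j, ss!j, ss!Suc j))"
proof (induction n ds ss rule: itr.induct)
  case (1 n d ds x y ss)
  have IH: "t \<in> set (itr (Suc n) ds (y#ss)) \<longleftrightarrow> (\<exists>j<length ds. t = (Suc n + j, ds!j, (y#ss)!j, (y#ss)!Suc j))"
    using 1 by simp
  show ?case
  proof
    assume "t \<in> set (itr n (d # ds) (x # y # ss))"
    then have "t = (n,d,x,y) \<or> t \<in> set (itr (Suc n) ds (y#ss))" by simp
    then show "\<exists>j<length (d#ds). t = (n + j, (d#ds)!j, (x#y#ss)!j, (x#y#ss)!Suc j)"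
    proof
      assume "t = (n,d,x,y)"
      then show ?thesis by (intro exI[of _ 0]) simp
    next
      assume "t \<in> set (itr (Suc n) ds (y#ss))"
      then obtain j where "j < length ds" "t = (Suc n + j, ds!j, (y#ss)!j, (y#ss)!Suc j)" using IH by blast
      then show ?thesis by (intro exI[of _ "Suc j"]) simp
    qed
  next
    assume "\<exists>j<length (d#ds). t = (n + j, (d#ds)!j, (x#y#ss)!j, (x#y#ss)!Suc j)"
    then obtain j where j: "j < length (d#ds)" "t = (n + j, (d#ds)!j, (x#y#ss)!j, (x#y#ss)!Suc j)" by blast
    show "t \<in> set (itr n (d # ds) (x # y # ss))"
    proof (cases j)
      case 0
      then show ?thesis using j by simp
    next
      case (Suc j')
      then have "t \<in> set (itr (Suc n) ds (y#ss))" using IH j by auto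
      then show ?thesis by simp
    qed
  qed
qed auto

lemma xor_eq_self: "xor (a::nat) c = a \<Longrightarrow> c = 0"
  by (metis xor_cancel xor_self_eq)

lemma generic:
  fixes cols :: "nat list" and W :: "(nat list \<times> nat list) list" and k m :: nat
  assumes colsA: "\<forall>c\<in>set cols. c \<noteq> 0 \<and> c < 2^m"
  and A: "\<forall>(ds,ss)\<in>set W. length ds = k \<and> length ss = Suc k \<and> distinct ds \<and> (\<forall>d\<in>set ds. d < length cols) \<and> (\<forall>(i,d,x,y)\<in>set (itr 0 ds ss). y = xor x (cols!d))"
  and B: "\<forall>d\<in>set [0..<length cols]. \<forall>\<sigma>\<in>set [0..<2^m]. \<exists>(ds,ss)\<in>set W. \<exists>(i,d',x,y)\<in>set (itr 0 ds ss). d' = d \<and> (\<sigma> = x \<or> \<sigma> = y)"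
  and C: "\<forall>w\<in>set W. \<forall>w'\<in>set W. \<forall>t\<in>set (itr 0 (fst w) (snd w)). \<forall>t'\<in>set (itr 0 (fst w') (snd w')).
     fst (snd t) = fst (snd t') \<and> (fst (snd (snd t)) = fst (snd (snd t')) \<or> fst (snd (snd t)) = snd (snd (snd t'))) \<longrightarrow> w = w' \<and> fst t = fst t'"
  shows "graph_divides (path_graph k) (hypercube (length cols))"
proof -
  let ?q = "length cols"
  have A0: "length ds = k" "length ss = Suc k" "distinct ds" "\<forall>d\<in>set ds. d < ?q"
    if "(ds,ss)\<in>set W" for ds ss using A that by auto
  have A1: "ss!Suc j = xor (ss!j) (cols!(ds!j))" if "(ds,ss)\<in>set W" "j < length ds" for ds ss j
  proof -
    have "(j, ds!j, ss!j, ss!Suc j) \<in> set (itr 0 ds ss)"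
      using that A0[OF that(1)] by (subst mem_itr) auto
    then show ?thesis using A that(1) by fastforce
  qed
  have B1: "\<exists>(ds,ss)\<in>set W. \<exists>j<k. ds!j = d \<and> (\<sigma> = ss!j \<or> \<sigma> = ss!Suc j)"
    if "d < ?q" "\<sigma> < 2^m" for d \<sigma>
  proof -
    from B that obtain ds ss t where w: "(ds,ss) \<in> set W" "t \<in> set (itr 0 ds ss)"
      "fst (snd t) = d \<and> (\<sigma> = fst (snd (snd t)) \<or> \<sigma> = snd (snd (snd t)))"
      by fastforce
    from w(2) A0[OF w(1)] obtain j where "j < k" "t = (j, ds!j, ss!j, ss!Suc j)"
      by (subst (asm) mem_itr) auto
    then show ?thesis using w by auto
  qed
  have C1: "ds = ds' \<and> ss = ss' \<and> i = j"
    if "(ds,ss)\<in>set W" "(ds',ss')\<in>set W" "i<k" "j<k" "ds!i = ds'!j" "ss!i = ss'!j \<or> ss!i = ss'!Suc j"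
    for ds ss ds' ss' i j
  proof -
    have "(i, ds!i, ss!i, ss!Suc i) \<in> set (itr 0 ds ss)"
      using that A0[OF that(1)] by (subst mem_itr) auto
    moreover have "(j, ds'!j, ss'!j, ss'!Suc j) \<in> set (itr 0 ds' ss')"
      using that A0[OF that(2)] by (subst mem_itr) auto
    ultimately have "(ds,ss) = (ds',ss') \<and> i = j"
      using C[rule_format, OF that(1) that(2)] that(5,6) by fastforce
    then show ?thesis by simp
  qed
  have synp: "syn cols (pth v ds i) = ss!i"
    if "(ds,ss)\<in>set W" "length v = ?q" "syn cols v = ss!0" "i \<le> k" for ds ss v i
  proof -
    have "syn cols (pth v ds i) = xor (syn cols v) (xor (ss!0) (ss!i))"
      using syn_pth[of v cols ds ss i] A0[OF that(1)] A1[OF that(1)] that by auto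
    then show ?thesis using that(3) by simp
  qed
  have nz: "cols!d \<noteq> 0" if "d < ?q" for d using colsA that by auto
  have key: "v = v' \<and> ds = ds'"
    if w: "(ds,ss)\<in>set W" "length v = ?q" "syn cols v = ss!0"
      and w': "(ds',ss')\<in>set W" "length v' = ?q" "syn cols v' = ss'!0"
      and ij: "i < k" "j < k"
      and e: "{pth v ds i, pth v ds (Suc i)} = {pth v' ds' j, pth v' ds' (Suc j)}"
    for v ds ss v' ds' ss' i j
  proof -
    let ?x = "pth v ds i" and ?x' = "pth v' ds' j" and ?d = "ds!i" and ?d' = "ds'!j"
    have li: "i < length ds" "j < length ds'" using A0[OF w(1)] A0[OF w'(1)] ij by auto
    have dq: "?d < ?q" "?d' < ?q" using A0(4)[OF w(1)] A0(4)[OF w'(1)] li by auto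
    have s1: "pth v ds (Suc i) = flipb ?x ?d" "pth v' ds' (Suc j) = flipb ?x' ?d'"
      using li by (auto simp: pth_Suc)
    have lx: "length ?x = ?q" "length ?x' = ?q" using w w' by auto
    have sx: "syn cols ?x = ss!i" "syn cols ?x' = ss'!j"
      "syn cols (flipb ?x ?d) = ss!Suc i" "syn cols (flipb ?x' ?d') = ss'!Suc j"
      using synp[OF w, of i] synp[OF w', of j] synp[OF w, of "Suc i"] synp[OF w', of "Suc j"] ij s1
      by auto
    from e s1 have "(?x = ?x' \<and> flipb ?x ?d = flipb ?x' ?d') \<or> (?x = flipb ?x' ?d' \<and> flipb ?x ?d = ?x')"
      by (simp add: doubleton_eq_iff)
    then show ?thesis
    proof
      assume h: "?x = ?x' \<and> flipb ?x ?d = flipb ?x' ?d'"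
      then have "flipb ?x ?d = flipb ?x ?d'" by metis
      then have "?d = ?d'" using flipb_inj[of ?d ?x ?d'] lx dq by simp
      moreover have "ss!i = ss'!j" using h sx by simp
      ultimately have eq: "ds = ds' \<and> ss = ss' \<and> i = j" using C1[OF w(1) w'(1) ij] by simp
      then have "pth v ds i = pth v' ds i" using h by simp
      then show ?thesis using pth_inj_v[OF A0(3)[OF w(1)]] eq by blast
    next
      assume h: "?x = flipb ?x' ?d' \<and> flipb ?x ?d = ?x'"
      then have "flipb (flipb ?x ?d) ?d' = ?x" by metis
      then have dd: "?d = ?d'" using flipb_flipb_eq[of ?d ?x ?d'] lx dq by simp
      have "ss!i = ss'!Suc j" using h sx by simp
      then have eq: "ds = ds' \<and> ss = ss' \<and> i = j" using C1[OF w(1) w'(1) ij] dd by simp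
      have "syn cols (flipb ?x ?d) = xor (ss!i) (cols!?d)"
        using syn_flipb[of ?x cols ?d] lx dq sx by simp
      moreover have "syn cols (flipb ?x ?d) = ss!i" using h sx eq by simp
      ultimately have "cols!?d = 0" using xor_eq_self by metis
      then show ?thesis using nz dq by blast
    qed
  qed
  define H where "H = {Kg v ds | v ds ss. (ds,ss) \<in> set W \<and> length v = ?q \<and> syn cols v = ss!0}"
  have H1: "subgraph K (hypercube ?q) \<and> graph_iso (path_graph k) K" if "K \<in> H" for K
  proof -
    from that obtain v ds ss where K: "K = Kg v ds" "(ds,ss) \<in> set W" "length v = ?q"
      unfolding H_def by blast
    show ?thesis using Kg_sub[of v ?q ds] Kg_iso[of ds v] A0[OF K(2)] K by auto
  qed
  have H2: "edges K1 \<inter> edges K2 = {}" if "K1 \<in> H" "K2 \<in> H" "K1 \<noteq> K2" for K1 K2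
  proof (rule ccontr)
    assume "edges K1 \<inter> edges K2 \<noteq> {}"
    then obtain e where e: "e \<in> edges K1" "e \<in> edges K2" by blast
    from that(1) obtain v ds ss where K1: "K1 = Kg v ds" "(ds,ss) \<in> set W" "length v = ?q" "syn cols v = ss!0"
      unfolding H_def by blast
    from that(2) obtain v' ds' ss' where K2: "K2 = Kg v' ds'" "(ds',ss') \<in> set W" "length v' = ?q" "syn cols v' = ss'!0"
      unfolding H_def by blast
    from e(1) K1(1) obtain i where i: "i < length ds" "e = {pth v ds i, pth v ds (Suc i)}"
      by (auto simp: edges_Kg)
    from e(2) K2(1) obtain j where j: "j < length ds'" "e = {pth v' ds' j, pth v' ds' (Suc j)}"
      by (auto simp: edges_Kg)
    have "v = v' \<and> ds = ds'"
      using key[OF K1(2-4) K2(2-4), of i j] i j A0(1)[OF K1(2)] A0(1)[OF K2(2)] by auto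
    then show False using that(3) K1(1) K2(1) by simp
  qed
  have H3: "\<Union>(edges ` H) = edges (hypercube ?q)"
  proof
    show "\<Union>(edges ` H) \<subseteq> edges (hypercube ?q)"
      using H1 unfolding subgraph_def by blast
  next
    show "edges (hypercube ?q) \<subseteq> \<Union>(edges ` H)"
    proof
      fix e assume "e \<in> edges (hypercube ?q)"
      then obtain u w where uw: "e = {u, w}" "length u = ?q" "length w = ?q" "hamming u w = 1"
        unfolding edges_hc by blast
      then obtain d where d: "d < ?q" "w = flipb u d" using hamming1 by metis
      have "syn cols u < 2^m" using syn_lt colsA by blast
      from B1[OF d(1) this] obtain ds ss j where w: "(ds,ss) \<in> set W" "j < k" "ds!j = d"
        "syn cols u = ss!j \<or> syn cols u = ss!Suc j" by blast
      note a0 = A0[OF w(1)]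
      have dsi: "distinct ds" using a0 by simp
      have sp: "syn cols (pth u ds i) = xor (syn cols u) (xor (ss!0) (ss!i))" if "i \<le> k" for i
        using syn_pth[of u cols ds ss i] a0 A1[OF w(1)] uw(2) that by auto
      from w(4) show "e \<in> \<Union>(edges ` H)"
      proof
        assume s: "syn cols u = ss!j"
        let ?v = "pth u ds j"
        have "syn cols ?v = ss!0" using sp[of j] w(2) s by (simp add: xor_ac)
        moreover have "length ?v = ?q" using uw(2) by simp
        ultimately have KH: "Kg ?v ds \<in> H" unfolding H_def using w(1) by blast
        have "pth ?v ds j = u" using pth_self_inv[OF dsi] .
        moreover have "pth ?v ds (Suc j) = flipb (pth ?v ds j) d" using w a0 by (simp add: pth_Suc)
        ultimately have "e = {pth ?v ds j, pth ?v ds (Suc j)}" using uw(1) d(2) by simp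
        then have "e \<in> edges (Kg ?v ds)" using w(2) a0 by (auto simp: edges_Kg)
        then show ?thesis using KH by blast
      next
        assume s: "syn cols u = ss!Suc j"
        let ?v = "pth u ds (Suc j)"
        have "syn cols ?v = ss!0" using sp[of "Suc j"] w(2) s by (simp add: xor_ac)
        moreover have "length ?v = ?q" using uw(2) by simp
        ultimately have KH: "Kg ?v ds \<in> H" unfolding H_def using w(1) by blast
        have u: "pth ?v ds (Suc j) = u" using pth_self_inv[OF dsi] .
        moreover have "pth ?v ds (Suc j) = flipb (pth ?v ds j) d" using w a0 by (simp add: pth_Suc)
        ultimately have "pth ?v ds j = flipb u d" by (metis flipb_flipb)
        then have "e = {pth ?v ds j, pth ?v ds (Suc j)}" using uw(1) d(2) u by (simp add: insert_commute)
        then have "e \<in> edges (Kg ?v ds)" using w(2) a0 by (auto simp: edges_Kg)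
        then show ?thesis using KH by blast
      qed
    qed
  qed
  show ?thesis
    unfolding graph_divides_def
    by (rule exI[of _ H]) (use H1 H2 H3 in blast)
qed

definition cols5 :: "nat list" where "cols5 = [1, 2, 4, 3, 5]"
definition W5 :: "(nat list \<times> nat list) list" where "W5 = [([1, 2, 4, 3], [6, 4, 0, 5, 6]), ([0, 1, 2, 3], [0, 1, 3, 7, 4]), ([3, 0, 4, 2], [1, 2, 3, 6, 2]), ([1, 2, 4, 0], [7, 5, 1, 4, 5]), ([3, 1, 4, 0], [3, 0, 2, 7, 6])]"
definition cols7 :: "nat list" where "cols7 = [1, 2, 3, 4, 5, 6, 7]"
definition W7 :: "(nat list \<times> nat list) list" where "W7 = [([6, 3, 0, 4], [6, 1, 5, 4, 1]), ([3, 2, 5, 1], [7, 3, 0, 6, 4]), ([6, 2, 4, 1], [3, 4, 7, 2, 0]), ([2, 3, 4, 0], [1, 2, 6, 3, 2]), ([5, 1, 4, 6], [1, 7, 5, 0, 7]), ([3, 0, 1, 5], [4, 0, 1, 3, 5]), ([0, 2, 6, 5], [7, 6, 5, 2, 4])]"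
definition cols9 :: "nat list" where "cols9 = [1, 2, 4, 8, 3, 5, 6, 9, 10]"
definition W9 :: "(nat list \<times> nat list) list" where "W9 = [([0, 2, 5, 8, 1, 7, 4, 6], [15, 14, 10, 15, 5, 7, 14, 13, 11]), ([6, 8, 0, 3, 2, 1, 4, 5], [7, 1, 11, 10, 2, 6, 4, 7, 2]), ([3, 8, 0, 4, 7, 2, 6, 1], [1, 9, 3, 2, 1, 8, 12, 10, 8]), ([6, 8, 5, 1, 3, 2, 7, 4], [4, 2, 8, 13, 15, 7, 3, 10, 9]), ([7, 8, 5, 4, 3, 0, 1, 6], [13, 4, 14, 11, 8, 0, 1, 3, 5]), ([3, 0, 8, 2, 6, 7, 4, 5], [14, 6, 7, 13, 9, 15, 6, 5, 0]), ([0, 2, 6, 5, 4, 1, 7, 3], [5, 4, 0, 6, 3, 0, 2, 11, 3]), ([7, 3, 0, 4, 2, 1, 5, 8], [12, 5, 13, 12, 15, 11, 9, 12, 6]), ([2, 5, 3, 1, 6, 0, 7, 8], [5, 1, 4, 12, 14, 8, 9, 0, 10])]"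
definition cols11 :: "nat list" where "cols11 = [1, 2, 4, 8, 3, 5, 6, 9, 10, 12, 7]"
definition W11 :: "(nat list \<times> nat list) list" where "W11 = [([4, 8, 5, 0, 9, 7, 3, 2], [9, 10, 0, 5, 4, 8, 1, 9, 13]), ([3, 8, 10, 2, 1, 6, 9, 5], [4, 12, 6, 1, 5, 7, 1, 13, 8]), ([3, 4, 6, 1, 10, 5, 0, 7], [11, 3, 0, 6, 4, 3, 6, 7, 14]), ([1, 2, 8, 3, 7, 4, 9, 0], [1, 3, 7, 13, 5, 12, 15, 3, 2]), ([0, 2, 6, 5, 9, 3, 8, 4], [10, 11, 15, 9, 12, 0, 8, 2, 1]), ([10, 6, 3, 4, 9, 1, 7, 5], [15, 8, 14, 6, 5, 9, 11, 2, 7]), ([7, 1, 4, 10, 0, 2, 6, 9], [6, 15, 13, 14, 9, 8, 12, 10, 6]), ([0, 7, 6, 10, 8, 5, 3, 1], [12, 13, 4, 2, 5, 15, 10, 2, 0]), ([2, 9, 5, 6, 10, 1, 4, 8], [6, 2, 14, 11, 13, 10, 8, 11, 1]), ([8, 0, 3, 9, 10, 1, 2, 7], [4, 14, 15, 7, 11, 12, 14, 10, 3]), ([2, 10, 4, 5, 0, 7, 8, 6], [4, 0, 7, 4, 1, 0, 9, 3, 5])]"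

lemma div5: "graph_divides (path_graph 4) (hypercube 5)"
proof -
  have "graph_divides (path_graph 4) (hypercube (length cols5))"
  proof (rule generic[where m=3])
    show "\<forall>c\<in>set cols5. c \<noteq> 0 \<and> c < 2^3" by (simp add: cols5_def)
    show "\<forall>(ds,ss)\<in>set W5. length ds = 4 \<and> length ss = Suc 4 \<and> distinct ds \<and> (\<forall>d\<in>set ds. d < length cols5) \<and> (\<forall>(i,d,x,y)\<in>set (itr 0 ds ss). y = xor x (cols5!d))"
      by (simp add: W5_def cols5_def)
    show "\<forall>d\<in>set [0..<length cols5]. \<forall>\<sigma>\<in>set [0..<2^3]. \<exists>(ds,ss)\<in>set W5. \<exists>(i,d',x,y)\<in>set (itr 0 ds ss). d' = d \<and> (\<sigma> = x \<or> \<sigma> = y)"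
      by (simp add: W5_def cols5_def upt_rec)
    show "\<forall>w\<in>set W5. \<forall>w'\<in>set W5. \<forall>t\<in>set (itr 0 (fst w) (snd w)). \<forall>t'\<in>set (itr 0 (fst w') (snd w')).
     fst (snd t) = fst (snd t') \<and> (fst (snd (snd t)) = fst (snd (snd t')) \<or> fst (snd (snd t)) = snd (snd (snd t'))) \<longrightarrow> w = w' \<and> fst t = fst t'"
      by (simp add: W5_def)
  qed
  moreover have L: "length cols5 = 5" by (simp add: cols5_def)
  ultimately show ?thesis by simp
qed

lemma div7: "graph_divides (path_graph 4) (hypercube 7)"
proof -
  have "graph_divides (path_graph 4) (hypercube (length cols7))"
  proof (rule generic[where m=3])
    show "\<forall>c\<in>set cols7. c \<noteq> 0 \<and> c < 2^3" by (simp add: cols7_def)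
    show "\<forall>(ds,ss)\<in>set W7. length ds = 4 \<and> length ss = Suc 4 \<and> distinct ds \<and> (\<forall>d\<in>set ds. d < length cols7) \<and> (\<forall>(i,d,x,y)\<in>set (itr 0 ds ss). y = xor x (cols7!d))"
      by (simp add: W7_def cols7_def)
    show "\<forall>d\<in>set [0..<length cols7]. \<forall>\<sigma>\<in>set [0..<2^3]. \<exists>(ds,ss)\<in>set W7. \<exists>(i,d',x,y)\<in>set (itr 0 ds ss). d' = d \<and> (\<sigma> = x \<or> \<sigma> = y)"
      by (simp add: W7_def cols7_def upt_rec)
    show "\<forall>w\<in>set W7. \<forall>w'\<in>set W7. \<forall>t\<in>set (itr 0 (fst w) (snd w)). \<forall>t'\<in>set (itr 0 (fst w') (snd w')).
     fst (snd t) = fst (snd t') \<and> (fst (snd (snd t)) = fst (snd (snd t')) \<or> fst (snd (snd t)) = snd (snd (snd t'))) \<longrightarrow> w = w' \<and> fst t = fst t'"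
      by (simp add: W7_def)
  qed
  moreover have L: "length cols7 = 7" by (simp add: cols7_def)
  ultimately show ?thesis by simp
qed

lemma div9: "graph_divides (path_graph 8) (hypercube 9)"
proof -
  have "graph_divides (path_graph 8) (hypercube (length cols9))"
  proof (rule generic[where m=4])
    show "\<forall>c\<in>set cols9. c \<noteq> 0 \<and> c < 2^4" by (simp add: cols9_def)
    show "\<forall>(ds,ss)\<in>set W9. length ds = 8 \<and> length ss = Suc 8 \<and> distinct ds \<and> (\<forall>d\<in>set ds. d < length cols9) \<and> (\<forall>(i,d,x,y)\<in>set (itr 0 ds ss). y = xor x (cols9!d))"
      by (simp add: W9_def cols9_def)
    show "\<forall>d\<in>set [0..<length cols9]. \<forall>\<sigma>\<in>set [0..<2^4]. \<exists>(ds,ss)\<in>set W9. \<exists>(i,d',x,y)\<in>set (itr 0 ds ss). d' = d \<and> (\<sigma> = x \<or> \<sigma> = y)"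
      by (simp add: W9_def cols9_def upt_rec)
    show "\<forall>w\<in>set W9. \<forall>w'\<in>set W9. \<forall>t\<in>set (itr 0 (fst w) (snd w)). \<forall>t'\<in>set (itr 0 (fst w') (snd w')).
     fst (snd t) = fst (snd t') \<and> (fst (snd (snd t)) = fst (snd (snd t')) \<or> fst (snd (snd t)) = snd (snd (snd t'))) \<longrightarrow> w = w' \<and> fst t = fst t'"
      by (simp add: W9_def)
  qed
  moreover have L: "length cols9 = 9" by (simp add: cols9_def)
  ultimately show ?thesis by simp
qed

lemma div11: "graph_divides (path_graph 8) (hypercube 11)"
proof -
  have "graph_divides (path_graph 8) (hypercube (length cols11))"
  proof (rule generic[where m=4])
    show "\<forall>c\<in>set cols11. c \<noteq> 0 \<and> c < 2^4" by (simp add: cols11_def)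
    show "\<forall>(ds,ss)\<in>set W11. length ds = 8 \<and> length ss = Suc 8 \<and> distinct ds \<and> (\<forall>d\<in>set ds. d < length cols11) \<and> (\<forall>(i,d,x,y)\<in>set (itr 0 ds ss). y = xor x (cols11!d))"
      by (simp add: W11_def cols11_def)
    show "\<forall>d\<in>set [0..<length cols11]. \<forall>\<sigma>\<in>set [0..<2^4]. \<exists>(ds,ss)\<in>set W11. \<exists>(i,d',x,y)\<in>set (itr 0 ds ss). d' = d \<and> (\<sigma> = x \<or> \<sigma> = y)"
      by (simp add: W11_def cols11_def upt_rec)
    show "\<forall>w\<in>set W11. \<forall>w'\<in>set W11. \<forall>t\<in>set (itr 0 (fst w) (snd w)). \<forall>t'\<in>set (itr 0 (fst w') (snd w')).
     fst (snd t) = fst (snd t') \<and> (fst (snd (snd t)) = fst (snd (snd t')) \<or> fst (snd (snd t)) = snd (snd (snd t'))) \<longrightarrow> w = w' \<and> fst t = fst t'"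
      by (simp add: W11_def)
  qed
  moreover have L: "length cols11 = 11" by (simp add: cols11_def)
  ultimately show ?thesis by simp
qed

theorem proposition5:
  shows "graph_divides (path_graph 4) (hypercube 5) \<and>
         graph_divides (path_graph 4) (hypercube 7) \<and>
         graph_divides (path_graph 8) (hypercube 9) \<and>
         graph_divides (path_graph 8) (hypercube 11)"
  using div5 div7 div9 div11 by blast

end
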